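(* Let $G$ be an arbitrary connected graph on $n$ vertices, let $0<p<\frac{1}{2}$ be a noise parameter and let $0<\delta<\frac{1}{2}$ be a confidence threshold. There exists an adaptive graph searching algorithm (in the noisy graph search model described in the context, with an adversarially fixed target) that, after $$\frac{1}{I(p)}\left(\log_2 n + \mathcal{O}\big(\sqrt{\log n \log \delta^{-1}}\big) + \mathcal{O}(\log \delta^{-1})\right)$$ queries, returns the target correctly with probability at least $1-\delta$, for every choice of the target.
   Context: Noisy graph search model: $G=(V,E)$ is an undirected, unweighted connected graph and $v^*\in V$ is an unknown target. In each step the algorithm queries a vertex $q$. A correct answer is "yes" if $q=v^*$, and otherwise is a neighbor $u$ of $q$ lying on a shortest path from $q$ to $v^*$. Each answer, independently, is erroneous with probability $p$ (in which case it may be an arbitrary different answer); otherwise it is correct. The algorithm is adaptive (queries may depend on previous answers). In the adversarial model the target is fixed before the search by an adversary who knows the algorithm. $H(p)=-p\log_2 p-(1-p)\log_2(1-p)$ and $I(p)=1-H(p)$. *)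

theory Defs
  imports "HOL-Probability.Probability"
begin

definition ugraph :: "'a set \<Rightarrow> ('a \<Rightarrow> 'a \<Rightarrow> bool) \<Rightarrow> bool" where
  "ugraph V E \<longleftrightarrow> finite V \<and> (\<forall>u v. E u v \<longrightarrow> u \<in> V \<and> v \<in> V \<and> u \<noteq> v \<and> E v u)"

inductive walk_len :: "('a \<Rightarrow> 'a \<Rightarrow> bool) \<Rightarrow> 'a \<Rightarrow> 'a \<Rightarrow> nat \<Rightarrow> bool" for E where
  wl_refl: "walk_len E u u 0"
| wl_step: "E u w \<Longrightarrow> walk_len E w v k \<Longrightarrow> walk_len E u v (Suc k)"

definition gconnected :: "'a set \<Rightarrow> ('a \<Rightarrow> 'a \<Rightarrow> bool) \<Rightarrow> bool" where
  "gconnected V E \<longleftrightarrow> V \<noteq> {} \<and> (\<forall>u\<in>V. \<forall>v\<in>V. \<exists>k. walk_len E u v k)"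

definition gdist :: "('a \<Rightarrow> 'a \<Rightarrow> bool) \<Rightarrow> 'a \<Rightarrow> 'a \<Rightarrow> nat" where
  "gdist E u v = (LEAST k. walk_len E u v k)"

text \<open>Answers: None = "yes", Some u = the neighbour u.\<close>
type_synonym 'a answer = "'a option"
type_synonym 'a history = "('a \<times> 'a answer) list"

definition answers :: "('a \<Rightarrow> 'a \<Rightarrow> bool) \<Rightarrow> 'a \<Rightarrow> 'a answer set" where
  "answers E q = insert None (Some ` {u. E q u})"

definition correct_answers :: "('a \<Rightarrow> 'a \<Rightarrow> bool) \<Rightarrow> 'a \<Rightarrow> 'a \<Rightarrow> 'a answer set" where
  "correct_answers E t q =
     (if q = t then {None}
      else Some ` {u. E q u \<and> gdist E u t + 1 = gdist E q t})"

definition valid_alg :: "'a set \<Rightarrow> ('a history \<Rightarrow> 'a pmf) \<Rightarrow> bool" where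
  "valid_alg V alg \<longleftrightarrow> (\<forall>h. set_pmf (alg h) \<subseteq> V)"

text \<open>Adversary for target t: given the history and the current query q it fixes a correct
  answer cor h q (one of the valid correct answers) and the answer err h q that is given
  in case of an error (any answer from the answer alphabet of q).\<close>
definition valid_adv :: "'a set \<Rightarrow> ('a \<Rightarrow> 'a \<Rightarrow> bool) \<Rightarrow> 'a \<Rightarrow>
    ('a history \<Rightarrow> 'a \<Rightarrow> 'a answer) \<Rightarrow> ('a history \<Rightarrow> 'a \<Rightarrow> 'a answer) \<Rightarrow> bool" where
  "valid_adv V E t cor err \<longleftrightarrow>
     (\<forall>h. \<forall>q\<in>V. cor h q \<in> correct_answers E t q \<and> err h q \<in> answers E q)"

fun run :: "('a history \<Rightarrow> 'a pmf) \<Rightarrow> ('a history \<Rightarrow> 'a \<Rightarrow> 'a answer) \<Rightarrow>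
    ('a history \<Rightarrow> 'a \<Rightarrow> 'a answer) \<Rightarrow> real \<Rightarrow> nat \<Rightarrow> 'a history pmf" where
  "run alg cor err p 0 = return_pmf []"
| "run alg cor err p (Suc k) =
     bind_pmf (run alg cor err p k) (\<lambda>h.
     bind_pmf (alg h) (\<lambda>q.
     bind_pmf (bernoulli_pmf p) (\<lambda>b.
     return_pmf (h @ [(q, if b then err h q else cor h q)]))))"

definition success_prob :: "('a history \<Rightarrow> 'a pmf) \<Rightarrow> ('a history \<Rightarrow> 'a pmf) \<Rightarrow>
    ('a history \<Rightarrow> 'a \<Rightarrow> 'a answer) \<Rightarrow> ('a history \<Rightarrow> 'a \<Rightarrow> 'a answer) \<Rightarrow>
    real \<Rightarrow> nat \<Rightarrow> 'a \<Rightarrow> real" where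
  "success_prob alg out cor err p T t =
     measure_pmf.prob (bind_pmf (run alg cor err p T) out) {t}"

definition Hent :: "real \<Rightarrow> real" where
  "Hent p = - p * log 2 p - (1 - p) * log 2 (1 - p)"

definition Icap :: "real \<Rightarrow> real" where
  "Icap p = 1 - Hent p"

end

theory Submission
  imports Defs
begin


lemma exp_aux1: "exp (u::real) \<le> 1 + u * exp u"
proof -
  have "1 - u \<le> exp (-u)" using exp_ge_add_one_self[of "-u"] by simp
  hence "exp u * (1 - u) \<le> exp u * exp (-u)" by (intro mult_left_mono) auto
  also have "\<dots> = 1" by (simp add: exp_minus)
  finally show ?thesis by (simp add: algebra_simps)
qed

lemma exp_neg_le: "(u::real) \<le> 0 \<Longrightarrow> exp u \<le> 1 + u + u^2"
proof -
  assume u: "u \<le> 0"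
  have "u * exp u \<le> u * (1 + u)" using exp_ge_add_one_self[of u] u
    by (intro mult_left_mono_neg) auto
  thus ?thesis using exp_aux1[of u] by (simp add: power2_eq_square algebra_simps)
qed

lemma exp_pos_le: "(x::real) \<ge> 0 \<Longrightarrow> exp x \<le> 1 + x + x^2 * exp x"
proof -
  assume x: "x \<ge> 0"
  have "x * exp x \<le> x * (1 + x * exp x)" using exp_aux1[of x] x
    by (intro mult_left_mono) auto
  thus ?thesis using exp_aux1[of x] by (simp add: power2_eq_square algebra_simps)
qed

lemma tangent_powr:
  fixes z z0 l :: real
  assumes "0 < z" "0 < z0" "0 < l" "l \<le> 1"
  shows "z powr l \<le> z0 powr l + l * z0 powr (l - 1) * (z - z0)"
proof -
  define y where "y = z / z0"
  have y: "y > 0" using assms by (simp add: y_def)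
  have "y powr l * 1 powr (1 - l) \<le> l * y + (1 - l) * 1"
    using Youngs_inequality_0[of l "1 - l" y 1] assms y by simp
  hence Y: "y powr l \<le> l * y + (1 - l)" by simp
  have z: "z = y * z0" using assms by (simp add: y_def)
  have "z powr l = y powr l * z0 powr l" using z y assms by (simp add: powr_mult)
  also have "\<dots> \<le> (l * y + (1 - l)) * z0 powr l"
    using Y by (intro mult_right_mono) auto
  also have "\<dots> = z0 powr l + l * (z0 powr l / z0) * (y * z0 - z0)"
    using assms by (simp add: field_simps)
  also have "z0 powr l / z0 = z0 powr (l - 1)"
    using assms by (simp add: powr_diff)
  finally show ?thesis using z by simp
qed

definition rho :: "real \<Rightarrow> real \<Rightarrow> real" where
  "rho p l = (1 - p) * (2 * (1 - p)) powr (- l) + p * (2 * p) powr (- l)"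

definition mu :: "real \<Rightarrow> real" where
  "mu p = (1 - p) * ln (2 * (1 - p)) + p * ln (2 * p)"

lemma mu_Icap: "0 < p \<Longrightarrow> p < 1 \<Longrightarrow> mu p = ln 2 * Icap p"
proof -
  assume p: "0 < p" "p < 1"
  have "ln (2*(1-p)) = ln 2 + ln (1-p)" using p by (intro ln_mult_pos) auto
  moreover have "ln (2*p) = ln 2 + ln p" using p by (intro ln_mult_pos) auto
  ultimately show ?thesis unfolding mu_def Icap_def Hent_def log_def by (simp add: field_simps)
qed

lemma mu_lower: assumes "0 < p" "p < 1/2" shows "(1 - 2*p)^2 \<le> 25/2 * mu p"
proof -
  define u where "u = 1 - 2*p"
  have u: "0 < u" "u < 1" using assms by (auto simp: u_def)
  define r where "r = sqrt (1 + u)"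
  have r: "r > 1" "r^2 = 1 + u" using u
    by (auto simp: r_def)
  have "r \<le> sqrt ((3/2)^2)" unfolding r_def using u by (intro real_sqrt_le_mono) (simp add: power2_eq_square)
  hence r3: "r \<le> 3/2" by simp
  have l1: "ln (1 - u) \<ge> - u / (1 - u)"
  proof -
    have "ln (1 / (1 - u)) \<le> 1 / (1 - u) - 1" using u by (intro ln_le_minus_one) auto
    thus ?thesis using u by (simp add: ln_div field_simps)
  qed
  have l2: "ln r \<ge> 1 - 1 / r"
  proof -
    have "ln (1 / r) \<le> 1 / r - 1" using r by (intro ln_le_minus_one) auto
    thus ?thesis using r by (simp add: ln_div)
  qed
  have lnr: "ln (1 + u) = 2 * ln r"
  proof -
    have "ln (r^2) = real 2 * ln r" using r by (intro ln_realpow)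
    thus ?thesis using r by simp
  qed
  have mu_eq: "mu p = (1 + u) / 2 * ln (1 + u) + (1 - u) / 2 * ln (1 - u)"
  proof -
    have h3: "1 + u = 2*(1-p)" and h4: "1 - u = 2*p" by (simp_all add: u_def)
    show ?thesis unfolding h3 h4 mu_def by simp
  qed
  have a: "(1 - u) / 2 * ln (1 - u) \<ge> - u / 2"
  proof -
    have "(1-u)/2 * (-u/(1-u)) \<le> (1-u)/2 * ln (1-u)" using l1 u by (intro mult_left_mono) auto
    moreover have "(1-u)/2 * (-u/(1-u)) = -u/2" using u by (simp add: field_simps)
    ultimately show ?thesis by linarith
  qed
  have b: "(1 + u) / 2 * ln (1 + u) \<ge> r^2 - r"
  proof -
    have "r^2 * (1 - 1/r) \<le> r^2 * ln r" using l2 by (intro mult_left_mono) auto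
    moreover have "r^2 * (1 - 1/r) = r^2 - r" using r by (simp add: field_simps power2_eq_square)
    moreover have "(1 + u) / 2 * ln (1 + u) = r^2 * ln r" using lnr r by simp
    ultimately show ?thesis by linarith
  qed
  have "(r - 1)^2 / 2 = r^2 - r - (r^2 - 1) / 2" by (simp add: power2_eq_square field_simps)
  hence "mu p \<ge> (r - 1)^2 / 2" using mu_eq a b r by simp
  moreover have "u^2 = (r - 1)^2 * (r + 1)^2" using r by (simp add: power2_eq_square algebra_simps)
  moreover have "(r + 1)^2 \<le> 25/4" proof -
    have "(r + 1)^2 \<le> (5/2)^2" using r r3 by (intro power_mono) auto
    thus ?thesis by (simp add: power2_eq_square)
  qed
  ultimately have "u^2 \<le> (r-1)^2 * (25/4)" by (metis mult_left_mono zero_le_power2)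
  thus ?thesis using \<open>mu p \<ge> (r - 1)^2 / 2\<close> by (simp add: u_def)
qed

lemma rho_le:
  assumes p: "0 < p" "p < 1/2" and l: "0 < l" "l \<le> 1/2"
  shows "rho p l \<le> 1 - l * mu p + 500 * l^2 * mu p"
proof -
  define a where "a = ln (2 * (1 - p))"
  define c where "c = ln (1 / (2 * p))"
  define s where "s = exp (c / 2)"
  define u where "u = 1 - 2 * p"
  have u: "0 < u" "u < 1" using p by (auto simp: u_def)
  have a0: "0 \<le> a" using p by (simp add: a_def)
  have a1: "a \<le> u" unfolding a_def u_def using ln_le_minus_one[of "2*(1-p)"] p by simp
  have c0: "0 \<le> c" using p by (simp add: c_def)
  have c1: "c \<le> 1 / (2*p) - 1" unfolding c_def using ln_le_minus_one[of "1/(2*p)"] p by simp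
  have ec: "exp c = 1 / (2 * p)" using p by (simp add: c_def)
  have s2: "s^2 = 1 / (2 * p)" unfolding s_def using ec
    by (simp add: power2_eq_square flip: exp_add)
  have s0: "s > 0" by (simp add: s_def)
  have pa: "(2 * (1 - p)) powr (- l) = exp (- l * a)" using p by (simp add: powr_def a_def)
  have pc: "(2 * p) powr (- l) = exp (l * c)" using p
    by (simp add: powr_def c_def ln_div)
  have e1: "exp (- l * a) \<le> 1 - l * a + (l * a)^2"
    using exp_neg_le[of "- l * a"] l a0 by (simp add: power2_eq_square)
  have e2: "exp (l * c) \<le> 1 + l * c + (l * c)^2 * exp (l * c)"
    using exp_pos_le[of "l * c"] l c0 by simp
  have "l * c \<le> (1/2) * c" using l c0 by (intro mult_right_mono) auto
  hence e3: "exp (l * c) \<le> s" unfolding s_def by simp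
  have e4: "exp (l * c) \<le> 1 + l * c + (l * c)^2 * s"
  proof -
    have "(l * c)^2 * exp (l * c) \<le> (l * c)^2 * s" using e3 by (intro mult_left_mono) auto
    thus ?thesis using e2 by linarith
  qed
  have mu_eq: "mu p = (1 - p) * a - p * c" unfolding mu_def a_def c_def using p
    by (simp add: ln_div)
  define M where "M = (1 - p) * a^2 + p * c^2 * s"
  have "rho p l \<le> (1 - p) * (1 - l * a + (l * a)^2) + p * (1 + l * c + (l * c)^2 * s)"
    unfolding rho_def pa pc using e1 e4 p
    by (intro add_mono mult_left_mono) auto
  also have "\<dots> = 1 - l * mu p + l^2 * M"
    unfolding mu_eq M_def by (simp add: power2_eq_square algebra_simps)
  finally have r1: "rho p l \<le> 1 - l * mu p + l^2 * M" .
  have ml: "u^2 \<le> 25/2 * mu p" using mu_lower[OF p] by (simp add: u_def)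
  have M1: "(1 - p) * a^2 \<le> u^2"
  proof -
    have "a^2 \<le> u^2" using a0 a1 by (intro power_mono) auto
    moreover have "(1 - p) * a^2 \<le> a^2" using p by (simp add: mult_left_le_one_le)
    ultimately show ?thesis by linarith
  qed
  have M2: "p * c^2 * s \<le> 8"
  proof -
    have "c / 4 \<le> exp (c / 4)" using exp_ge_add_one_self[of "c/4"] by linarith
    hence "c \<le> 4 * exp (c / 4)" by simp
    hence "c^2 \<le> (4 * exp (c / 4))^2" using c0 by (intro power_mono) auto
    also have "\<dots> = 16 * s" unfolding s_def
      by (simp add: power2_eq_square flip: exp_add)
    finally have "p * c^2 * s \<le> p * (16 * s) * s" using p s0
      by (intro mult_right_mono mult_left_mono) auto
    also have "\<dots> = 16 * p * s^2" by (simp add: power2_eq_square)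
    also have "\<dots> = 8" using p s2 by simp
    finally show ?thesis .
  qed
  have "M \<le> 500 * mu p"
  proof (cases "p \<ge> 1/4")
    case True
    have "1 / (2 * p) \<le> 2" using True p by (simp add: field_simps)
    hence s4: "s * s \<le> 4" using s2 by (simp add: power2_eq_square)
    have s2': "s \<le> 2"
    proof (rule ccontr)
      assume "\<not> s \<le> 2"
      hence "2 * 2 < s * s" by (intro mult_strict_mono) auto
      thus False using s4 by simp
    qed
    have "c^2 \<le> (u / (2 * p))^2" using c0 c1 p by (intro power_mono) (auto simp: u_def field_simps)
    hence "p * c^2 * s \<le> p * (u / (2 * p))^2 * 2" using p s0 s2'
      by (intro mult_mono mult_left_mono) auto
    hence P0: "p * c^2 * s \<le> p * (u / (2 * p))^2 * 2" .
    have P: "p * c^2 * s \<le> 2 * u^2"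
    proof -
      have "p * c^2 * s \<le> p * (u / (2 * p))^2 * 2" by (rule P0)
      also have "\<dots> = u^2 / (2 * p)" using p by (simp add: power2_eq_square field_simps)
      also have "\<dots> \<le> u^2 / (1/2)" using True by (intro divide_left_mono) auto
      also have "\<dots> = 2 * u^2" by simp
      finally show ?thesis .
    qed
    have M3: "M \<le> 3 * u^2" unfolding M_def using M1 P by linarith
    have "0 \<le> u^2" by simp
    thus ?thesis using ml M3 by linarith
  next
    case False
    have "u \<ge> 1/2" using False by (simp add: u_def)
    hence "u^2 \<ge> (1/2)^2" by (intro power_mono) auto
    hence "1/4 \<le> u^2" by (simp add: power2_eq_square)
    hence "mu p \<ge> 1/50" using ml by linarith
    moreover have "u^2 \<le> 1" using u by (simp add: power_le_one)
    hence "M \<le> 9" using M1 M2 unfolding M_def by linarith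
    ultimately show ?thesis by linarith
  qed
  hence "l^2 * M \<le> l^2 * (500 * mu p)" by (intro mult_left_mono) auto
  moreover have "l^2 * (500 * mu p) = 500 * l^2 * mu p" by simp
  ultimately show ?thesis using r1 by linarith
qed



lemma key_ineq:
  fixes p l x W Tc Te :: real
  assumes p: "0 < p" "p < 1/2" and l: "0 < l" "l \<le> 1" and x: "x > 0"
    and W: "W \<ge> 0" and T: "0 \<le> Tc" "0 \<le> Te" "2 * Tc \<le> W" "Tc + Te \<le> W"
  shows "(1-p) * ((p*W + (1-2*p)*Tc) / (x*(1-p))) powr l + p * ((p*W + (1-2*p)*Te) / (x*p)) powr l
         \<le> rho p l * (W / x) powr l"
proof (cases "W = 0")
  case True
  hence "Tc = 0" "Te = 0" using T by auto
  thus ?thesis using True by simp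
next
  case False
  hence Wp: "W > 0" using W by simp
  define tc where "tc = Tc / W"
  have tc: "0 \<le> tc" "tc \<le> 1/2" using T Wp by (auto simp: tc_def field_simps)
  have te: "Te / W \<le> 1 - tc" using T Wp by (auto simp: tc_def field_simps)
  define z1 where "z1 = (p + (1-2*p)*tc) / (1-p)"
  define z2 where "z2 = (p + (1-2*p)*(1-tc)) / p"
  define y1 where "y1 = 1 / (2*(1-p))"
  define y2 where "y2 = 1 / (2*p)"
  have z1p: "z1 > 0" using p tc by (auto simp: z1_def intro!: divide_pos_pos add_pos_nonneg)
  have z2p: "z2 > 0" using p tc by (auto simp: z2_def intro!: divide_pos_pos add_pos_nonneg)
  have Wx: "W / x > 0" using Wp x by simp
  have e1: "(p*W + (1-2*p)*Tc) / (x*(1-p)) = (W / x) * z1"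
    using p Wp x by (simp add: z1_def tc_def field_simps)
  have e2: "(p*W + (1-2*p)*Te) / (x*p) \<le> (W / x) * z2"
  proof -
    have "Te \<le> W * (1 - tc)" using te Wp by (simp add: field_simps)
    hence "(1-2*p)*Te \<le> (1-2*p)*(W*(1-tc))" using p by (intro mult_left_mono) auto
    hence "p*W + (1-2*p)*Te \<le> W * (p + (1-2*p)*(1-tc))" by (simp add: algebra_simps)
    hence "(p*W + (1-2*p)*Te) / (x*p) \<le> W * (p + (1-2*p)*(1-tc)) / (x*p)"
      using p x by (intro divide_right_mono) auto
    thus ?thesis using p x by (simp add: z2_def)
  qed
  have e2': "((p*W + (1-2*p)*Te) / (x*p)) powr l \<le> ((W / x) * z2) powr l"
    using e2 p x T l by (intro powr_mono2) auto
  have t1: "z1 powr l \<le> y1 powr l + l * y1 powr (l - 1) * (z1 - y1)"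
    using tangent_powr[of z1 y1 l] z1p p l by (simp add: y1_def)
  have t2: "z2 powr l \<le> y2 powr l + l * y2 powr (l - 1) * (z2 - y2)"
    using tangent_powr[of z2 y2 l] z2p p l by (simp add: y2_def)
  have "(1-p) * z1 = p + (1-2*p)*tc" using p by (simp add: z1_def)
  moreover have "(1-p) * y1 = 1/2" using p by (simp add: y1_def)
  ultimately have d1: "(1-p) * (z1 - y1) = (1-2*p)*(tc - 1/2)" by (simp add: algebra_simps)
  have "p * z2 = p + (1-2*p)*(1-tc)" using p by (simp add: z2_def)
  moreover have "p * y2 = 1/2" using p by (simp add: y2_def)
  ultimately have d2: "p * (z2 - y2) = (1-2*p)*(1/2 - tc)" by (simp add: algebra_simps)
  have y12: "y1 \<le> y2" using p by (simp add: y1_def y2_def field_simps)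
  have ym: "y2 powr (l - 1) \<le> y1 powr (l - 1)"
    using y12 p l by (intro powr_mono2') (auto simp: y1_def)
  have r1: "y1 powr l = (2*(1-p)) powr (-l)" using p
    by (simp add: y1_def powr_divide powr_minus_divide)
  have r2: "y2 powr l = (2*p) powr (-l)" using p
    by (simp add: y2_def powr_divide powr_minus_divide)
  have "(1-p) * z1 powr l + p * z2 powr l
     \<le> (1-p) * (y1 powr l + l * y1 powr (l - 1) * (z1 - y1)) + p * (y2 powr l + l * y2 powr (l - 1) * (z2 - y2))"
    using t1 t2 p by (intro add_mono mult_left_mono) auto
  also have "\<dots> = rho p l + l * (1-2*p) * (tc - 1/2) * (y1 powr (l - 1) - y2 powr (l - 1))"
  proof -
    have "(1-p) * (l * y1 powr (l - 1) * (z1 - y1)) = l * y1 powr (l - 1) * ((1-p) * (z1 - y1))" by simp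
    moreover have "p * (l * y2 powr (l - 1) * (z2 - y2)) = l * y2 powr (l - 1) * (p * (z2 - y2))" by simp
    ultimately show ?thesis unfolding rho_def r1 r2 d1 d2 by (simp add: algebra_simps)
  qed
  also have "\<dots> \<le> rho p l"
  proof -
    have "0 \<le> l * (1-2*p) * (1/2 - tc) * (y1 powr (l - 1) - y2 powr (l - 1))"
      using l p tc ym by (intro mult_nonneg_nonneg) auto
    thus ?thesis by (simp add: algebra_simps)
  qed
  finally have B: "(1-p) * z1 powr l + p * z2 powr l \<le> rho p l" .
  have "(1-p) * ((p*W + (1-2*p)*Tc) / (x*(1-p))) powr l + p * ((p*W + (1-2*p)*Te) / (x*p)) powr l
      \<le> (1-p) * ((W / x) * z1) powr l + p * ((W / x) * z2) powr l"
    unfolding e1 using e2' p by (intro add_mono mult_left_mono) auto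
  also have "\<dots> = (W / x) powr l * ((1-p) * z1 powr l + p * z2 powr l)"
  proof -
    have "((W / x) * z1) powr l = (W / x) powr l * z1 powr l" using Wx z1p by (intro powr_mult; simp)
    moreover have "((W / x) * z2) powr l = (W / x) powr l * z2 powr l" using Wx z2p by (intro powr_mult; simp)
    ultimately show ?thesis by (simp only: algebra_simps)
  qed
  also have "\<dots> \<le> (W / x) powr l * rho p l" using B by (intro mult_left_mono) auto
  finally show ?thesis by (simp add: mult.commute)
qed



definition fac :: "('a \<Rightarrow> 'a \<Rightarrow> bool) \<Rightarrow> real \<Rightarrow> 'a \<Rightarrow> 'a answer \<Rightarrow> 'a \<Rightarrow> real" where
  "fac E p q A v = (if A \<in> correct_answers E v q then 1 - p else p)"

definition wt :: "('a \<Rightarrow> 'a \<Rightarrow> bool) \<Rightarrow> real \<Rightarrow> 'a history \<Rightarrow> 'a \<Rightarrow> real" where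
  "wt E p h v = prod_list (map (\<lambda>qa. fac E p (fst qa) (snd qa) v) h)"

lemma wt_Nil [simp]: "wt E p [] v = 1"
  by (simp add: wt_def)

lemma wt_snoc [simp]: "wt E p (h @ [(q, A)]) v = wt E p h v * fac E p q A v"
  by (simp add: wt_def)

lemma wt_pos: "0 < p \<Longrightarrow> p < 1 \<Longrightarrow> 0 < wt E p h v"
  by (induction h) (auto simp: wt_def fac_def)

lemma wt_nonneg: "0 < p \<Longrightarrow> p < 1 \<Longrightarrow> 0 \<le> wt E p h v"
  using wt_pos[of p E h v] by simp

lemma gdist_walk:
  assumes "gconnected V E" "u \<in> V" "v \<in> V"
  shows "walk_len E u v (gdist E u v)"
proof -
  obtain k where "walk_len E u v k" using assms unfolding gconnected_def by blast
  thus ?thesis unfolding gdist_def by (rule LeastI)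
qed

lemma gdist_le: "walk_len E u v k \<Longrightarrow> gdist E u v \<le> k"
  unfolding gdist_def by (rule Least_le)

lemma gdist_nb:
  assumes "ugraph V E" "gconnected V E" "E q u" "v \<in> V"
  shows "gdist E u v \<le> gdist E q v + 1"
proof -
  have q: "q \<in> V" and Euq: "E u q" using assms unfolding ugraph_def by auto
  have "walk_len E q v (gdist E q v)" using gdist_walk[OF assms(2) q assms(4)] .
  hence "walk_len E u v (Suc (gdist E q v))" using Euq by (simp add: walk_len.wl_step)
  thus ?thesis using gdist_le by fastforce
qed

lemma ca_Some: "Some u \<in> correct_answers E v q \<longleftrightarrow> v \<noteq> q \<and> E q u \<and> gdist E u v + 1 = gdist E q v"
  unfolding correct_answers_def by auto

lemma ca_None: "None \<in> correct_answers E v q \<longleftrightarrow> v = q"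
  unfolding correct_answers_def by auto

definition Fd :: "('a \<Rightarrow> 'a \<Rightarrow> bool) \<Rightarrow> real \<Rightarrow> 'a history \<Rightarrow> 'a set \<Rightarrow> 'a \<Rightarrow> real" where
  "Fd E p h V q = (\<Sum>v\<in>V. wt E p h v * real (gdist E q v))"

lemma median_prop:
  assumes G: "ugraph V E" "gconnected V E" and p: "0 < p" "p < 1"
    and q: "q \<in> V" and qmin: "\<forall>u'\<in>V. Fd E p h V q \<le> Fd E p h V u'"
  shows "2 * (\<Sum>v\<in>V. if Some u \<in> correct_answers E v q then wt E p h v else 0) \<le> (\<Sum>v\<in>V. wt E p h v)"
proof (cases "E q u")
  case False
  hence "(\<Sum>v\<in>V. if Some u \<in> correct_answers E v q then wt E p h v else 0) = 0"
    by (intro sum.neutral) (auto simp: ca_Some)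
  moreover have "0 \<le> (\<Sum>v\<in>V. wt E p h v)" by (intro sum_nonneg wt_nonneg p)
  ultimately show ?thesis by simp
next
  case True
  have u: "u \<in> V" using G(1) True unfolding ugraph_def by auto
  define S where "S v = (if Some u \<in> correct_answers E v q then wt E p h v else 0)" for v
  have pt: "wt E p h v * real (gdist E u v) \<le> wt E p h v * real (gdist E q v) + wt E p h v - 2 * S v"
    if v: "v \<in> V" for v
  proof (cases "Some u \<in> correct_answers E v q")
    case True
    hence "real (gdist E q v) = real (gdist E u v) + 1" by (auto simp: ca_Some)
    hence "wt E p h v * real (gdist E q v) = wt E p h v * real (gdist E u v) + wt E p h v"
      by (simp add: algebra_simps)
    thus ?thesis using True by (simp add: S_def)
  next
    case False
    have "real (gdist E u v) \<le> real (gdist E q v) + 1" using gdist_nb[OF G True v] by simp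
    hence "wt E p h v * real (gdist E u v) \<le> wt E p h v * (real (gdist E q v) + 1)"
      using wt_nonneg[OF p] by (intro mult_left_mono) auto
    thus ?thesis using False by (simp add: S_def algebra_simps)
  qed
  have "Fd E p h V u \<le> (\<Sum>v\<in>V. wt E p h v * real (gdist E q v) + wt E p h v - 2 * S v)"
    unfolding Fd_def using pt by (intro sum_mono) auto
  also have "\<dots> = Fd E p h V q + (\<Sum>v\<in>V. wt E p h v) - 2 * (\<Sum>v\<in>V. S v)"
    unfolding Fd_def by (simp add: sum.distrib sum_subtractf sum_distrib_left)
  finally have "Fd E p h V u \<le> Fd E p h V q + (\<Sum>v\<in>V. wt E p h v) - 2 * (\<Sum>v\<in>V. S v)" .
  moreover have "Fd E p h V q \<le> Fd E p h V u" using qmin u by auto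
  ultimately show ?thesis unfolding S_def by linarith
qed



definition Phi :: "'a set \<Rightarrow> ('a \<Rightarrow> 'a \<Rightarrow> bool) \<Rightarrow> real \<Rightarrow> real \<Rightarrow> 'a \<Rightarrow> 'a history \<Rightarrow> real" where
  "Phi V E p l t h = ((\<Sum>v\<in>V-{t}. wt E p h v) / wt E p h t) powr l"

lemma Phi_nonneg: "0 \<le> Phi V E p l t h"
  by (simp add: Phi_def)

lemma step:
  assumes G: "ugraph V E" "gconnected V E" and p: "0 < p" "p < 1/2" and l: "0 < l" "l \<le> 1"
    and t: "t \<in> V" and q: "q \<in> V" and qmin: "\<forall>u'\<in>V. Fd E p h V q \<le> Fd E p h V u'"
    and c: "c \<in> correct_answers E t q"
  shows "(1-p) * Phi V E p l t (h @ [(q, c)]) + p * Phi V E p l t (h @ [(q, e)]) \<le> rho p l * Phi V E p l t h"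
proof -
  have p1: "0 < p" "p < 1" using p by auto
  have fin: "finite V" using G(1) unfolding ugraph_def by auto
  define w where "w = wt E p h"
  have wpos: "\<And>v. 0 < w v" unfolding w_def by (rule wt_pos[OF p1])
  have wnn: "\<And>v. 0 \<le> w v" using wpos less_imp_le by blast
  define x where "x = w t"
  define W where "W = (\<Sum>v\<in>V-{t}. w v)"
  define TA where "TA A = (\<Sum>v\<in>V-{t}. if A \<in> correct_answers E v q then w v else 0)" for A
  define SA where "SA A = (\<Sum>v\<in>V. if A \<in> correct_answers E v q then w v else 0)" for A
  have xpos: "x > 0" using wpos by (simp add: x_def)
  have W0: "W \<ge> 0" unfolding W_def using wnn by (intro sum_nonneg) auto
  have TA0: "TA A \<ge> 0" for A unfolding TA_def using wnn by (intro sum_nonneg) auto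
  have TAW: "TA A \<le> W" for A unfolding TA_def W_def using wnn by (intro sum_mono) auto
  have Wtot: "(\<Sum>v\<in>V. w v) = x + W" unfolding x_def W_def using fin t by (simp add: sum.remove)
  have SAeq: "SA A = (if A \<in> correct_answers E t q then x else 0) + TA A" for A
    unfolding SA_def TA_def x_def using fin t by (simp add: sum.remove)
  have med: "2 * SA (Some u) \<le> x + W" for u
    using median_prop[OF G p1 q qmin, of u] Wtot unfolding SA_def w_def by simp
  have sumA: "(\<Sum>v\<in>V-{t}. wt E p (h @ [(q, A)]) v) = p * W + (1 - 2*p) * TA A" for A
  proof -
    have "wt E p (h @ [(q, A)]) v = p * w v + (1 - 2*p) * (if A \<in> correct_answers E v q then w v else 0)" for v
      by (simp add: w_def fac_def algebra_simps)
    hence "(\<Sum>v\<in>V-{t}. wt E p (h @ [(q, A)]) v) = (\<Sum>v\<in>V-{t}. p * w v + (1 - 2*p) * (if A \<in> correct_answers E v q then w v else 0))"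
      by simp
    also have "\<dots> = p * W + (1 - 2*p) * TA A"
      unfolding W_def TA_def by (simp add: sum.distrib sum_distrib_left)
    finally show ?thesis .
  qed
  have wc: "wt E p (h @ [(q, c)]) t = x * (1 - p)" using c by (simp add: x_def w_def fac_def)
  have we: "wt E p (h @ [(q, e)]) t \<ge> x * p"
    using xpos p by (simp add: x_def w_def fac_def)
  have T1: "2 * TA c \<le> W \<and> TA c + TA e \<le> W"
  proof (cases c)
    case None
    hence tq: "t = q" using c by (simp add: ca_None)
    have "TA c = 0" unfolding TA_def None using tq by (intro sum.neutral) (auto simp: ca_None)
    thus ?thesis using W0 TAW[of e] by simp
  next
    case (Some u)
    have s1: "SA c = x + TA c" using SAeq[of c] c by simp
    have s2: "2 * SA c \<le> x + W" using med[of u] Some by simp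
    have A: "2 * TA c \<le> W" using s1 s2 xpos by linarith
    have B: "TA c + TA e \<le> W"
    proof (cases e)
      case None
      have "TA c + TA e = (\<Sum>v\<in>V-{t}. (if c \<in> correct_answers E v q then w v else 0) + (if e \<in> correct_answers E v q then w v else 0))"
        unfolding TA_def by (simp add: sum.distrib)
      also have "\<dots> \<le> W" unfolding W_def
        using wnn by (intro sum_mono) (auto simp: Some None ca_Some ca_None)
      finally show ?thesis .
    next
      case (Some u')
      have "2 * SA e \<le> x + W" using med[of u'] Some by simp
      moreover have "TA e \<le> SA e" using SAeq[of e] xpos by simp
      ultimately show ?thesis using s1 s2 by linarith
    qed
    show ?thesis using A B by simp
  qed
  have N0: "0 \<le> p * W + (1 - 2*p) * TA e" using p W0 TA0[of e] by simp
  have Pc: "Phi V E p l t (h @ [(q, c)]) = ((p * W + (1 - 2*p) * TA c) / (x * (1 - p))) powr l"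
    unfolding Phi_def sumA wc ..
  have Pe: "Phi V E p l t (h @ [(q, e)]) \<le> ((p * W + (1 - 2*p) * TA e) / (x * p)) powr l"
  proof -
    have "(p * W + (1 - 2*p) * TA e) / wt E p (h @ [(q, e)]) t \<le> (p * W + (1 - 2*p) * TA e) / (x * p)"
    proof (rule divide_left_mono)
      have "0 < wt E p (h @ [(q, e)]) t" by (rule wt_pos[OF p1])
      thus "0 < wt E p (h @ [(q, e)]) t * (x * p)" using xpos p by simp
    qed (use N0 we in auto)
    moreover have "0 \<le> (p * W + (1 - 2*p) * TA e) / wt E p (h @ [(q, e)]) t"
      using N0 wt_pos[OF p1, of E "h @ [(q, e)]" t] by simp
    ultimately show ?thesis unfolding Phi_def sumA using l by (intro powr_mono2) auto
  qed
  have Ph: "Phi V E p l t h = (W / x) powr l" unfolding Phi_def W_def x_def w_def ..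
  have "(1-p) * Phi V E p l t (h @ [(q, c)]) + p * Phi V E p l t (h @ [(q, e)])
     \<le> (1-p) * ((p * W + (1 - 2*p) * TA c) / (x * (1 - p))) powr l + p * ((p * W + (1 - 2*p) * TA e) / (x * p)) powr l"
    unfolding Pc using Pe p by (intro add_mono mult_left_mono) auto
  also have "\<dots> \<le> rho p l * (W / x) powr l"
    using key_ineq[OF p l xpos W0 TA0[of c] TA0[of e]] T1 by simp
  finally show ?thesis unfolding Ph .
qed



lemma mu_pos: "0 < p \<Longrightarrow> p < 1/2 \<Longrightarrow> 0 < mu p"
proof -
  assume p: "0 < p" "p < 1/2"
  have "0 < (1 - 2*p)^2" using p by simp
  thus ?thesis using mu_lower[OF p] by linarith
qed

lemma mu_le: "0 < p \<Longrightarrow> p < 1/2 \<Longrightarrow> mu p \<le> ln 2"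
proof -
  assume p: "0 < p" "p < 1/2"
  have "ln (2*(1-p)) \<le> ln 2" using p by simp
  moreover have "ln (2*p) \<le> ln 2" using p by simp
  ultimately have "(1-p) * ln (2*(1-p)) + p * ln (2*p) \<le> (1-p) * ln 2 + p * ln 2"
    using p by (intro add_mono mult_left_mono) auto
  thus ?thesis unfolding mu_def by (simp add: algebra_simps)
qed

lemma arith_final:
  fixes n :: nat and p \<delta> :: real
  assumes n: "n \<ge> 1" and p: "0 < p" "p < 1/2" and d: "0 < \<delta>" "\<delta> < 1/2"
  shows "\<exists>T l. 0 < l \<and> l \<le> 1/2 \<and> rho p l ^ T * real n powr l \<le> \<delta> \<and>
     real T \<le> (1 / Icap p) * (log 2 (real n) + 4008004 * sqrt (ln (real n) * ln (1/\<delta>)) + 4008004 * ln (1/\<delta>))"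
proof -
  define K :: real where "K = 500"
  define L where "L = ln (real n)"
  define D where "D = ln (1/\<delta>)"
  define m where "m = mu p"
  have L0: "L \<ge> 0" using n by (simp add: L_def)
  have D2: "D > ln 2" unfolding D_def using d by (intro ln_less_cancel_iff[THEN iffD2]) (auto simp: field_simps)
  have ln2: "ln (2::real) > 1/2" using ln_2_less_1 ln2_ge_two_thirds by linarith
  have D0: "D > 0" using D2 ln2 by linarith
  have m0: "m > 0" using mu_pos[OF p] by (simp add: m_def)
  have mI: "m = ln 2 * Icap p" using mu_Icap[of p] p by (simp add: m_def)
  have Ipos: "Icap p > 0" using m0 mI by (simp add: zero_less_mult_iff)
  have Ile: "Icap p \<le> 1" using mu_le[OF p] mI by (simp add: m_def)
  define l where "l = (if L \<le> 16 * K^2 * D then 1 / (4*K) else sqrt (D / L))"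
  have l0: "0 < l" using D0 L0 by (auto simp: l_def K_def)
  have l1: "l \<le> 1 / (4*K)"
  proof (cases "L \<le> 16 * K^2 * D")
    case False
    hence "D / L < 1 / (16 * K^2)" using D0 L0 by (simp add: field_simps K_def)
    hence "sqrt (D / L) < sqrt ((1 / (4*K))^2)" by (simp add: power2_eq_square K_def)
    thus ?thesis using False by (simp add: l_def K_def)
  qed (simp add: l_def)
  have l2: "l \<le> 1/2" using l1 by (simp add: K_def)
  have Kl: "K * l \<le> 1/4" using l1 by (simp add: K_def field_simps)
  define T0 where "T0 = (L + D / l) * (1 + 2*K*l) / m"
  define T where "T = nat \<lceil>T0\<rceil>"
  have T0pos: "T0 \<ge> 0" using L0 D0 l0 m0 by (simp add: T0_def K_def)
  have TT0: "real T \<ge> T0" unfolding T_def by linarith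
  have TT1: "real T \<le> T0 + 1" unfolding T_def using T0pos by linarith
  have rho0: "rho p l \<ge> 0" unfolding rho_def using p by simp
  have rhob: "rho p l \<le> exp (- (l * m * (1 - K * l)))"
  proof -
    have "rho p l \<le> 1 - l * m + K * l^2 * m" using rho_le[OF p l0 l2] by (simp add: m_def K_def)
    also have "\<dots> = 1 + (- (l * m * (1 - K * l)))" by (simp add: power2_eq_square algebra_simps)
    also have "\<dots> \<le> exp (- (l * m * (1 - K * l)))" by (rule exp_ge_add_one_self)
    finally show ?thesis .
  qed
  have A: "rho p l ^ T * real n powr l \<le> \<delta>"
  proof -
    have "rho p l ^ T \<le> exp (- (l * m * (1 - K * l))) ^ T" using rho0 rhob by (intro power_mono) auto
    also have "\<dots> = exp (- (real T * (l * m * (1 - K * l))))" by (simp add: exp_of_nat_mult[symmetric])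
    finally have r: "rho p l ^ T \<le> exp (- (real T * (l * m * (1 - K * l))))" .
    have np: "real n powr l = exp (l * L)" using n by (simp add: powr_def L_def)
    have key: "real T * (l * m * (1 - K * l)) \<ge> l * L + D"
    proof -
      have "real T * (m * l) \<ge> T0 * (m * l)" using TT0 m0 l0 by (intro mult_right_mono) auto
      also have "T0 * (m * l) = (l * L + D) * (1 + 2*K*l)" using m0 l0 by (simp add: T0_def field_simps)
      finally have "real T * (m * l) \<ge> (l * L + D) * (1 + 2*K*l)" .
      hence "real T * (m * l) * (1 - K * l) \<ge> (l * L + D) * (1 + 2*K*l) * (1 - K * l)"
        using Kl by (intro mult_right_mono) auto
      moreover have "(l * L + D) * (1 + 2*K*l) * (1 - K * l) \<ge> (l * L + D) * 1"
      proof -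
        have "(1 + 2*K*l) * (1 - K * l) = 1 + (K*l) * (1 - 2 * (K*l))" by (simp add: algebra_simps)
        moreover have "(K*l) * (1 - 2 * (K*l)) \<ge> 0" using Kl l0 by (intro mult_nonneg_nonneg) (auto simp: K_def)
        ultimately have "(1 + 2*K*l) * (1 - K * l) \<ge> 1" by linarith
        moreover have "l * L + D \<ge> 0" using l0 L0 D0 by simp
        ultimately show ?thesis by (metis mult.assoc mult_left_mono)
      qed
      ultimately show ?thesis by (simp add: algebra_simps)
    qed
    have "rho p l ^ T * real n powr l \<le> exp (- (real T * (l * m * (1 - K * l)))) * exp (l * L)"
      unfolding np using r by (intro mult_right_mono) auto
    also have "\<dots> = exp (l * L - real T * (l * m * (1 - K * l)))" by (simp only: mult_exp_exp) (simp add: algebra_simps)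
    also have "\<dots> \<le> exp (- D)" using key by simp
    also have "\<dots> = \<delta>" using d by (simp add: D_def exp_minus ln_div)
    finally show ?thesis .
  qed
  define C1 :: real where "C1 = 1 + 2 * K"
  define C2 :: real where "C2 = 6 * K + 8 * K^2"
  have B0: "(L + D / l) * (1 + 2*K*l) \<le> L + C1 * sqrt (L * D) + C2 * D"
  proof (cases "L \<le> 16 * K^2 * D")
    case True
    hence ll: "l = 1 / (4*K)" by (simp add: l_def)
    have "(L + D / l) * (1 + 2*K*l) = L + 4*K*D + L/2 + 2*K*D" unfolding ll by (simp add: K_def field_simps)
    also have "\<dots> \<le> L + C2 * D" using True by (simp add: C2_def K_def)
    also have "\<dots> \<le> L + C1 * sqrt (L * D) + C2 * D" using L0 D0 by (simp add: C1_def K_def)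
    finally show ?thesis .
  next
    case False
    hence ll: "l = sqrt (D / L)" by (simp add: l_def)
    have Lp: "L > 0" using False D0 by (smt (verit) K_def mult_pos_pos zero_less_power)
    have s1: "D / l = sqrt (L * D)" unfolding ll using Lp D0
      by (simp add: real_sqrt_divide real_sqrt_mult field_simps)
    have s2: "l * L = sqrt (L * D)" unfolding ll using Lp D0
      by (simp add: real_sqrt_divide real_sqrt_mult field_simps)
    have "(L + D / l) * (1 + 2*K*l) = L + D / l + 2 * K * (l * L) + 2 * K * D"
      using l0 by (simp add: field_simps)
    also have "\<dots> = L + C1 * sqrt (L * D) + 2 * K * D" unfolding s1 s2 C1_def by (simp add: algebra_simps)
    also have "\<dots> \<le> L + C1 * sqrt (L * D) + C2 * D" using D0 by (simp add: C2_def K_def)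
    finally show ?thesis .
  qed
  have B: "real T \<le> (1 / Icap p) * (log 2 (real n) + 4008004 * sqrt (L * D) + 4008004 * D)"
  proof -
    have "real T \<le> (L + C1 * sqrt (L * D) + C2 * D) / m + 1"
      using TT1 B0 m0 unfolding T0_def by (smt (verit) divide_right_mono)
    also have "1 \<le> D / m"
    proof -
      have "m \<le> ln 2" using mu_le[OF p] by (simp add: m_def)
      thus ?thesis using D2 m0 by (simp add: field_simps)
    qed
    hence "(L + C1 * sqrt (L * D) + C2 * D) / m + 1 \<le> (L + C1 * sqrt (L * D) + (C2 + 1) * D) / m"
      by (simp add: add_divide_distrib algebra_simps)
    also have "\<dots> = (1 / Icap p) * (L / ln 2 + (C1 / ln 2) * sqrt (L * D) + ((C2 + 1) / ln 2) * D)"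
      unfolding mI using ln2 Ipos by (simp add: field_simps)
    also have "\<dots> \<le> (1 / Icap p) * (log 2 (real n) + 4008004 * sqrt (L * D) + 4008004 * D)"
    proof -
      have "C1 / ln 2 \<le> 4008004" using ln2 by (simp add: C1_def K_def field_simps)
      hence a: "(C1 / ln 2) * sqrt (L * D) \<le> 4008004 * sqrt (L * D)" using L0 D0 by (intro mult_right_mono) auto
      have "(C2 + 1) / ln 2 \<le> 4008004" using ln2 by (simp add: C2_def K_def field_simps)
      hence b: "((C2 + 1) / ln 2) * D \<le> 4008004 * D" using D0 by (intro mult_right_mono) auto
      have c: "L / ln 2 = log 2 (real n)" by (simp add: L_def log_def)
      show ?thesis using a b c Ipos by (intro mult_left_mono) auto
    qed
    finally show ?thesis .
  qed
  show ?thesis using A B l0 l2 unfolding L_def D_def by blast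
qed



definition med :: "'a set \<Rightarrow> ('a \<Rightarrow> 'a \<Rightarrow> bool) \<Rightarrow> real \<Rightarrow> 'a history \<Rightarrow> 'a" where
  "med V E p h = (SOME q. q \<in> V \<and> (\<forall>u\<in>V. Fd E p h V q \<le> Fd E p h V u))"

definition best :: "'a set \<Rightarrow> ('a \<Rightarrow> 'a \<Rightarrow> bool) \<Rightarrow> real \<Rightarrow> 'a history \<Rightarrow> 'a" where
  "best V E p h = (SOME v. v \<in> V \<and> (\<forall>u\<in>V. wt E p h u \<le> wt E p h v))"

lemma ex_argmin: "finite V \<Longrightarrow> V \<noteq> {} \<Longrightarrow> \<exists>q\<in>V. \<forall>u\<in>V. (f q :: real) \<le> f u"
proof -
  assume V: "finite V" "V \<noteq> {}"
  have "Min (f ` V) \<in> f ` V" using V by (intro Min_in) auto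
  then obtain q where q: "q \<in> V" "f q = Min (f ` V)" by auto
  have "\<forall>u\<in>V. f q \<le> f u" using V q by auto
  thus ?thesis using q by blast
qed

lemma ex_argmax: "finite V \<Longrightarrow> V \<noteq> {} \<Longrightarrow> \<exists>q\<in>V. \<forall>u\<in>V. f u \<le> (f q :: real)"
proof -
  assume V: "finite V" "V \<noteq> {}"
  have "Max (f ` V) \<in> f ` V" using V by (intro Max_in) auto
  then obtain q where q: "q \<in> V" "f q = Max (f ` V)" by auto
  have "\<forall>u\<in>V. f u \<le> f q" using V q by auto
  thus ?thesis using q by blast
qed

lemma med_prop:
  assumes "ugraph V E" "gconnected V E"
  shows "med V E p h \<in> V \<and> (\<forall>u\<in>V. Fd E p h V (med V E p h) \<le> Fd E p h V u)"
proof -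
  have "finite V" "V \<noteq> {}" using assms unfolding ugraph_def gconnected_def by auto
  from ex_argmin[OF this, of "Fd E p h V"]
  have "\<exists>q. q \<in> V \<and> (\<forall>u\<in>V. Fd E p h V q \<le> Fd E p h V u)" by blast
  thus ?thesis unfolding med_def by (rule someI_ex)
qed

lemma best_prop:
  assumes "ugraph V E" "gconnected V E"
  shows "best V E p h \<in> V \<and> (\<forall>u\<in>V. wt E p h u \<le> wt E p h (best V E p h))"
proof -
  have "finite V" "V \<noteq> {}" using assms unfolding ugraph_def gconnected_def by auto
  from ex_argmax[OF this, of "wt E p h"]
  have "\<exists>q. q \<in> V \<and> (\<forall>u\<in>V. wt E p h u \<le> wt E p h q)" by blast
  thus ?thesis unfolding best_def by (rule someI_ex)
qed

lemma nn_bern: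
  assumes "0 < p" "p < 1" "\<And>b. 0 \<le> f b"
  shows "(\<integral>\<^sup>+b. ennreal (f b) \<partial>measure_pmf (bernoulli_pmf p)) = ennreal (p * f True + (1-p) * f False)"
proof -
  have "(\<integral>\<^sup>+b. ennreal (f b) \<partial>measure_pmf (bernoulli_pmf p)) = (\<Sum>b\<in>UNIV. ennreal (f b) * ennreal (pmf (bernoulli_pmf p) b))"
    using assms by (subst nn_integral_measure_pmf_finite) auto
  also have "\<dots> = ennreal (f True) * ennreal p + ennreal (f False) * ennreal (1 - p)"
    using assms by (simp add: UNIV_bool)
  also have "\<dots> = ennreal (p * f True + (1-p) * f False)"
    using assms by (simp add: ennreal_mult[symmetric] mult.commute)
  finally show ?thesis .
qed

lemma run_bound:
  assumes G: "ugraph V E" "gconnected V E" and p: "0 < p" "p < 1/2" and l: "0 < l" "l \<le> 1"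
    and t: "t \<in> V" and adv: "valid_adv V E t cor err"
  shows "(\<integral>\<^sup>+h. ennreal (Phi V E p l t h) \<partial>measure_pmf (run (\<lambda>h. return_pmf (med V E p h)) cor err p k))
         \<le> ennreal (rho p l ^ k * Phi V E p l t [])"
proof (induction k)
  case 0
  show ?case by (simp add: Phi_nonneg)
next
  case (Suc k)
  let ?M = "measure_pmf (run (\<lambda>h. return_pmf (med V E p h)) cor err p k)"
  let ?q = "\<lambda>h. med V E p h"
  have rho0: "rho p l \<ge> 0" unfolding rho_def using p by simp
  have "(\<integral>\<^sup>+h. ennreal (Phi V E p l t h) \<partial>measure_pmf (run (\<lambda>h. return_pmf (med V E p h)) cor err p (Suc k)))
      = (\<integral>\<^sup>+h. (\<integral>\<^sup>+b. ennreal (Phi V E p l t (h @ [(?q h, if b then err h (?q h) else cor h (?q h))])) \<partial>measure_pmf (bernoulli_pmf p)) \<partial>?M)"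
    by (simp add: bind_return_pmf)
  also have "\<dots> = (\<integral>\<^sup>+h. ennreal (p * Phi V E p l t (h @ [(?q h, err h (?q h))]) + (1-p) * Phi V E p l t (h @ [(?q h, cor h (?q h))])) \<partial>?M)"
    using p by (intro nn_integral_cong, subst nn_bern) (auto simp: Phi_nonneg)
  also have "\<dots> \<le> (\<integral>\<^sup>+h. ennreal (rho p l * Phi V E p l t h) \<partial>?M)"
  proof (intro nn_integral_mono ennreal_leI)
    fix h
    have mq: "?q h \<in> V" "\<forall>u\<in>V. Fd E p h V (?q h) \<le> Fd E p h V u" using med_prop[OF G] by auto
    have c: "cor h (?q h) \<in> correct_answers E t (?q h)" using adv mq unfolding valid_adv_def by auto
    show "p * Phi V E p l t (h @ [(?q h, err h (?q h))]) + (1-p) * Phi V E p l t (h @ [(?q h, cor h (?q h))])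
          \<le> rho p l * Phi V E p l t h"
      using step[OF G p l t mq(1) mq(2) c, of "err h (?q h)"] by simp
  qed
  also have "\<dots> = ennreal (rho p l) * (\<integral>\<^sup>+h. ennreal (Phi V E p l t h) \<partial>?M)"
  proof -
    have "\<And>h. ennreal (rho p l * Phi V E p l t h) = ennreal (rho p l) * ennreal (Phi V E p l t h)"
      by (rule ennreal_mult[OF rho0 Phi_nonneg])
    hence "(\<integral>\<^sup>+h. ennreal (rho p l * Phi V E p l t h) \<partial>?M) = (\<integral>\<^sup>+h. ennreal (rho p l) * ennreal (Phi V E p l t h) \<partial>?M)"
      by simp
    also have "\<dots> = ennreal (rho p l) * (\<integral>\<^sup>+h. ennreal (Phi V E p l t h) \<partial>?M)"
      by (rule nn_integral_cmult) simp
    finally show ?thesis .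
  qed
  also have "\<dots> \<le> ennreal (rho p l) * ennreal (rho p l ^ k * Phi V E p l t [])"
    using Suc.IH by (intro mult_left_mono) auto
  also have "\<dots> = ennreal (rho p l ^ Suc k * Phi V E p l t [])"
    using rho0 by (simp add: ennreal_mult[symmetric] Phi_nonneg mult.assoc)
  finally show ?case .
qed

lemma Phi_fail:
  assumes G: "ugraph V E" "gconnected V E" and p: "0 < p" "p < 1" and l: "0 \<le> l"
    and t: "t \<in> V" and b: "best V E p h \<noteq> t"
  shows "1 \<le> Phi V E p l t h"
proof -
  have fin: "finite V" using G unfolding ugraph_def by auto
  have bp: "best V E p h \<in> V" "wt E p h t \<le> wt E p h (best V E p h)" using best_prop[OF G, of p h] t by auto
  have "wt E p h (best V E p h) \<le> (\<Sum>v\<in>V-{t}. wt E p h v)"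
    using fin bp b by (intro member_le_sum) (auto intro: wt_nonneg[OF p])
  hence "wt E p h t \<le> (\<Sum>v\<in>V-{t}. wt E p h v)" using bp by linarith
  moreover have "0 < wt E p h t" by (rule wt_pos[OF p])
  ultimately have "1 \<le> (\<Sum>v\<in>V-{t}. wt E p h v) / wt E p h t" by simp
  thus ?thesis unfolding Phi_def using l by (rule ge_one_powr_ge_zero)
qed

lemma fail_bound:
  assumes G: "ugraph V E" "gconnected V E" and p: "0 < p" "p < 1/2" and l: "0 < l" "l \<le> 1"
    and t: "t \<in> V" and adv: "valid_adv V E t cor err"
  shows "measure_pmf.prob (run (\<lambda>h. return_pmf (med V E p h)) cor err p k) {h. best V E p h \<noteq> t}
         \<le> rho p l ^ k * Phi V E p l t []"
proof -
  let ?M = "measure_pmf (run (\<lambda>h. return_pmf (med V E p h)) cor err p k)"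
  have p1: "0 < p" "p < 1" using p by auto
  have "emeasure ?M {h. best V E p h \<noteq> t} = (\<integral>\<^sup>+h. indicator {h. best V E p h \<noteq> t} h \<partial>?M)"
    by simp
  also have "\<dots> \<le> (\<integral>\<^sup>+h. ennreal (Phi V E p l t h) \<partial>?M)"
  proof (intro nn_integral_mono)
    fix h
    show "indicator {h. best V E p h \<noteq> t} h \<le> ennreal (Phi V E p l t h)"
      using Phi_fail[OF G p1 _ t, of l h] l by (auto simp: indicator_def)
  qed
  also have "\<dots> \<le> ennreal (rho p l ^ k * Phi V E p l t [])" by (rule run_bound[OF G p l t adv])
  finally have "ennreal (measure ?M {h. best V E p h \<noteq> t}) \<le> ennreal (rho p l ^ k * Phi V E p l t [])"
    by (simp add: measure_pmf.emeasure_eq_measure)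
  moreover have "0 \<le> rho p l ^ k * Phi V E p l t []"
    using p by (intro mult_nonneg_nonneg zero_le_power Phi_nonneg) (simp add: rho_def)
  ultimately show ?thesis by simp
qed

theorem theorem1:
  "\<exists>C>0. \<forall>(V::'a set) E n p \<delta>.
     ugraph V E \<and> gconnected V E \<and> card V = n \<and> 0 < p \<and> p < 1/2 \<and> 0 < \<delta> \<and> \<delta> < 1/2 \<longrightarrow>
     (\<exists>T alg out.
        real T \<le> (1 / Icap p) * (log 2 (real n) + C * sqrt (ln (real n) * ln (1/\<delta>)) + C * ln (1/\<delta>))
        \<and> valid_alg V alg
        \<and> (\<forall>t\<in>V. \<forall>cor err. valid_adv V E t cor err \<longrightarrow>
              success_prob alg out cor err p T t \<ge> 1 - \<delta>))"
proof (intro exI[of _ "4008004::real"] conjI allI impI)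
  show "(0::real) < 4008004" by simp
  fix V :: "'a set" and E :: "'a \<Rightarrow> 'a \<Rightarrow> bool" and n :: nat and p \<delta> :: real
  assume H: "ugraph V E \<and> gconnected V E \<and> card V = n \<and> 0 < p \<and> p < 1/2 \<and> 0 < \<delta> \<and> \<delta> < 1/2"
  hence G: "ugraph V E" "gconnected V E" and n: "card V = n" and p: "0 < p" "p < 1/2"
    and d: "0 < \<delta>" "\<delta> < 1/2" by auto
  have fin: "finite V" and ne: "V \<noteq> {}" using G unfolding ugraph_def gconnected_def by auto
  have n1: "n \<ge> 1" using fin ne n card_gt_0_iff[of V] by simp
  obtain T l where Tl: "0 < l" "l \<le> 1/2" "rho p l ^ T * real n powr l \<le> \<delta>"
    "real T \<le> (1 / Icap p) * (log 2 (real n) + 4008004 * sqrt (ln (real n) * ln (1/\<delta>)) + 4008004 * ln (1/\<delta>))"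
    using arith_final[OF n1 p d] by blast
  have l1: "l \<le> 1" using Tl by simp
  define alg where "alg = (\<lambda>h. return_pmf (med V E p h))"
  define out where "out = (\<lambda>h. return_pmf (best V E p h))"
  show "\<exists>T alg out.
        real T \<le> (1 / Icap p) * (log 2 (real n) + 4008004 * sqrt (ln (real n) * ln (1/\<delta>)) + 4008004 * ln (1/\<delta>))
        \<and> valid_alg V alg
        \<and> (\<forall>t\<in>V. \<forall>cor err. valid_adv V E t cor err \<longrightarrow>
              success_prob alg out cor err p T t \<ge> 1 - \<delta>)"
  proof (intro exI conjI)
    show "real T \<le> (1 / Icap p) * (log 2 (real n) + 4008004 * sqrt (ln (real n) * ln (1/\<delta>)) + 4008004 * ln (1/\<delta>))"
      by (rule Tl(4))
    show "valid_alg V alg" unfolding valid_alg_def alg_def using med_prop[OF G] by auto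
    show "\<forall>t\<in>V. \<forall>cor err. valid_adv V E t cor err \<longrightarrow> success_prob alg out cor err p T t \<ge> 1 - \<delta>"
    proof (intro ballI allI impI)
      fix t cor err
      assume t: "t \<in> V" and adv: "valid_adv V E t cor err"
      let ?R = "run alg cor err p T"
      have "success_prob alg out cor err p T t = measure_pmf.prob (map_pmf (best V E p) ?R) {t}"
        unfolding success_prob_def out_def map_pmf_def ..
      also have "\<dots> = measure_pmf.prob ?R (UNIV - {h. best V E p h \<noteq> t})"
        by (simp add: vimage_def set_diff_eq)
      also have "\<dots> = 1 - measure_pmf.prob ?R {h. best V E p h \<noteq> t}"
        using measure_pmf.prob_compl[of "{h. best V E p h \<noteq> t}" ?R] by simp
      finally have s: "success_prob alg out cor err p T t = 1 - measure_pmf.prob ?R {h. best V E p h \<noteq> t}" .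
      have f: "measure_pmf.prob ?R {h. best V E p h \<noteq> t} \<le> rho p l ^ T * Phi V E p l t []"
        unfolding alg_def by (rule fail_bound[OF G p Tl(1) l1 t adv])
      have "Phi V E p l t [] = real (n - 1) powr l"
        unfolding Phi_def using fin t n by (simp add: card_Diff_singleton of_nat_diff)
      also have "\<dots> \<le> real n powr l" using Tl(1) by (intro powr_mono2) auto
      finally have "rho p l ^ T * Phi V E p l t [] \<le> rho p l ^ T * real n powr l"
        using p by (intro mult_left_mono zero_le_power) (auto simp: rho_def)
      thus "success_prob alg out cor err p T t \<ge> 1 - \<delta>" using s f Tl(3) by linarith
    qed
  qed
qed


end
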